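(* Let $K$ be a valued field with value group $\Gamma$, let $L$ be an immediate valued field extension of $K$, let $a\in L\setminus K$, and let $(a_\rho)$ be a pseudocauchy sequence in $K$ of transcendental type over $K$ with $a_\rho\leadsto a$. Put $\gamma_\rho=v(a-a_\rho)$. Let $R(X)\in K(X)\setminus K$. Then there is an index $\rho_0$ such that for $\rho>\rho_0$: (1) $R(a_\rho)$ is defined and lies in $K$; (2) $R(a_\rho)\leadsto R(a)$; (3) there are $\alpha\in\Gamma$ and $i\ge1$ such that eventually $v(R(a_\rho)-R(a))=\alpha+i\gamma_\rho$; (4) with $\alpha,i$ as in (3), $(\alpha+i\gamma_\rho)$ is eventually cofinal in $v(R(a)-K)$; (5) $(R(a_\rho))$ is a divergent pseudocauchy sequence in $K$; (6) with $\alpha,i$ as in (3), $v(R(a)-K)=(\alpha+i\,v(a-K))^{\downarrow}$.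
   Context: For a valued field $K$ with valuation $v:K\to\Gamma\cup\{\infty\}$, write $f\prec g$ iff $vf>vg$. A well-indexed sequence is one indexed by an infinite well-ordered set without greatest element. A well-indexed sequence $(a_\rho)$ pseudoconverges to $a$ (written $a_\rho\leadsto a$) if for some $\rho_0$, $a-a_\sigma\prec a-a_\rho$ whenever $\sigma>\rho>\rho_0$. $(a_\rho)$ is a pseudocauchy sequence if for some $\rho_0$, $a_\tau-a_\sigma\prec a_\sigma-a_\rho$ whenever $\tau>\sigma>\rho>\rho_0$; it is divergent in $K$ if it has no pseudolimit in $K$; it is of transcendental type over $K$ if for every nonconstant $P\in K[X]$, $v(P(a_\rho))$ is eventually constant. An immediate extension has the same value group and residue field. For $b\in L$, $v(b-K)=\{v(b-c):c\in K\}$; for $A\subseteq\Gamma$, $A^{\downarrow}=\{\delta\in\Gamma:\delta\le\sigma\text{ for some }\sigma\in A\}$, and $\alpha+iA=\{\alpha+i\sigma:\sigma\in A\}$. *)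

theory Defs
  imports "HOL-Computational_Algebra.Polynomial"
begin

text \<open>A Krull valuation on the field 'l (the big field L), written additively.
  The value of 0 is \<infinity>; we represent it by never looking at v 0.\<close>

definition valuation :: "('l::field \<Rightarrow> 'g::linordered_ab_group_add) \<Rightarrow> bool" where
  "valuation v \<longleftrightarrow>
     (\<forall>x y. x \<noteq> 0 \<and> y \<noteq> 0 \<longrightarrow> v (x * y) = v x + v y) \<and>
     (\<forall>x y. x \<noteq> 0 \<and> y \<noteq> 0 \<and> x + y \<noteq> 0 \<longrightarrow> min (v x) (v y) \<le> v (x + y))"

definition subfield :: "'l::field set \<Rightarrow> bool" where
  "subfield K \<longleftrightarrow> 0 \<in> K \<and> 1 \<in> K \<and>
     (\<forall>x\<in>K. \<forall>y\<in>K. x + y \<in> K \<and> x * y \<in> K) \<and>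
     (\<forall>x\<in>K. - x \<in> K \<and> inverse x \<in> K)"

definition value_group :: "('l::field \<Rightarrow> 'g) \<Rightarrow> 'l set \<Rightarrow> 'g set" where
  "value_group v K = v ` (K - {0})"

text \<open>L (= UNIV) is an immediate extension of K: same value group, and the
  residue field of K (embedded in that of L) is all of the residue field of L.\<close>
definition immediate_ext :: "('l::field \<Rightarrow> 'g::linordered_ab_group_add) \<Rightarrow> 'l set \<Rightarrow> bool" where
  "immediate_ext v K \<longleftrightarrow>
     value_group v K = value_group v UNIV \<and>
     (\<forall>x. x \<noteq> 0 \<and> 0 \<le> v x \<longrightarrow> (\<exists>y\<in>K. x - y = 0 \<or> 0 < v (x - y)))"

text \<open>f \<prec> g iff v f > v g (with v 0 = \<infinity>).\<close>
definition vprec :: "('l::field \<Rightarrow> 'g::linordered_ab_group_add) \<Rightarrow> 'l \<Rightarrow> 'l \<Rightarrow> bool" where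
  "vprec v f g \<longleftrightarrow> g \<noteq> 0 \<and> (f = 0 \<or> v g < v f)"

definition vext :: "('l::field \<Rightarrow> 'g) \<Rightarrow> 'l \<Rightarrow> 'g option" where
  "vext v x = (if x = 0 then None else Some (v x))"

text \<open>Well-indexed sequences are functions on a wellorder type 'i without
  greatest element (which is then automatically infinite).\<close>
definition no_greatest :: "'i::wellorder itself \<Rightarrow> bool" where
  "no_greatest _ \<longleftrightarrow> (\<forall>\<rho>::'i. \<exists>\<sigma>. \<rho> < \<sigma>)"

definition pseudoconverges ::
  "('l::field \<Rightarrow> 'g::linordered_ab_group_add) \<Rightarrow> ('i::wellorder \<Rightarrow> 'l) \<Rightarrow> 'l \<Rightarrow> bool" where
  "pseudoconverges v s a \<longleftrightarrow>
     (\<exists>\<rho>0. \<forall>\<rho> \<sigma>. \<rho>0 < \<rho> \<and> \<rho> < \<sigma> \<longrightarrow> vprec v (a - s \<sigma>) (a - s \<rho>))"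

definition pseudocauchy ::
  "('l::field \<Rightarrow> 'g::linordered_ab_group_add) \<Rightarrow> ('i::wellorder \<Rightarrow> 'l) \<Rightarrow> bool" where
  "pseudocauchy v s \<longleftrightarrow>
     (\<exists>\<rho>0. \<forall>\<rho> \<sigma> \<tau>. \<rho>0 < \<rho> \<and> \<rho> < \<sigma> \<and> \<sigma> < \<tau> \<longrightarrow>
        vprec v (s \<tau> - s \<sigma>) (s \<sigma> - s \<rho>))"

definition divergent_in ::
  "('l::field \<Rightarrow> 'g::linordered_ab_group_add) \<Rightarrow> 'l set \<Rightarrow> ('i::wellorder \<Rightarrow> 'l) \<Rightarrow> bool" where
  "divergent_in v K s \<longleftrightarrow> \<not> (\<exists>b\<in>K. pseudoconverges v s b)"

definition poly_over :: "'l::field set \<Rightarrow> 'l poly \<Rightarrow> bool" where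
  "poly_over K P \<longleftrightarrow> (\<forall>n. coeff P n \<in> K)"

definition transcendental_type ::
  "('l::field \<Rightarrow> 'g::linordered_ab_group_add) \<Rightarrow> 'l set \<Rightarrow> ('i::wellorder \<Rightarrow> 'l) \<Rightarrow> bool" where
  "transcendental_type v K s \<longleftrightarrow>
     (\<forall>P. poly_over K P \<and> degree P > 0 \<longrightarrow>
        (\<exists>\<rho>0 c. \<forall>\<rho>. \<rho>0 < \<rho> \<longrightarrow> vext v (poly P (s \<rho>)) = c))"

text \<open>v(b - K) = {v(b - c) : c \<in> K}; only used for b \<notin> K, where all values are finite.\<close>
definition vdist_set :: "('l::field \<Rightarrow> 'g) \<Rightarrow> 'l \<Rightarrow> 'l set \<Rightarrow> 'g set" where
  "vdist_set v b K = {v (b - c) | c. c \<in> K \<and> b - c \<noteq> 0}"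

definition downclosure :: "'g::linorder set \<Rightarrow> 'g set \<Rightarrow> 'g set" where
  "downclosure \<Gamma> A = {\<delta> \<in> \<Gamma>. \<exists>\<sigma>\<in>A. \<delta> \<le> \<sigma>}"

definition nsmul :: "nat \<Rightarrow> 'g::ab_group_add \<Rightarrow> 'g" where
  "nsmul i g = (\<Sum>j<i. g)"

definition rat_eval :: "'l::field poly \<Rightarrow> 'l poly \<Rightarrow> 'l \<Rightarrow> 'l" where
  "rat_eval P Q x = poly P x / poly Q x"

end

theory Submission
  imports Defs
begin


definition ev :: "('i::wellorder \<Rightarrow> bool) \<Rightarrow> bool" where
  "ev P \<longleftrightarrow> (\<exists>\<rho>0. \<forall>\<rho>. \<rho>0 < \<rho> \<longrightarrow> P \<rho>)"

definition smono :: "('i::wellorder \<Rightarrow> 'g::linorder) \<Rightarrow> bool" where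
  "smono g \<longleftrightarrow> (\<exists>\<rho>0. \<forall>\<rho> \<sigma>. \<rho>0 < \<rho> \<and> \<rho> < \<sigma> \<longrightarrow> g \<rho> < g \<sigma>)"

lemma ev_conj: "ev P \<Longrightarrow> ev Q \<Longrightarrow> ev (\<lambda>\<rho>. P \<rho> \<and> Q \<rho>)"
  unfolding ev_def
proof -
  assume "\<exists>\<rho>0. \<forall>\<rho>. \<rho>0 < \<rho> \<longrightarrow> P \<rho>" "\<exists>\<rho>0. \<forall>\<rho>. \<rho>0 < \<rho> \<longrightarrow> Q \<rho>"
  then obtain a b where "\<forall>\<rho>. a < \<rho> \<longrightarrow> P \<rho>" "\<forall>\<rho>. b < \<rho> \<longrightarrow> Q \<rho>" by blast
  then show "\<exists>\<rho>0. \<forall>\<rho>. \<rho>0 < \<rho> \<longrightarrow> P \<rho> \<and> Q \<rho>" by (intro exI[of _ "max a b"]) auto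
qed

lemma ev_mono: "ev P \<Longrightarrow> (\<And>\<rho>. P \<rho> \<Longrightarrow> Q \<rho>) \<Longrightarrow> ev Q" unfolding ev_def by blast

lemma ev_True: "(\<And>\<rho>. P \<rho>) \<Longrightarrow> ev P" unfolding ev_def by blast

lemma ev_two: assumes "no_greatest TYPE('i::wellorder)" "ev (P::'i \<Rightarrow> bool)"
  shows "\<exists>\<rho> \<sigma>. \<rho> < \<sigma> \<and> P \<rho> \<and> P \<sigma>"
proof -
  from assms(2) obtain a where a: "\<forall>\<rho>. a < \<rho> \<longrightarrow> P \<rho>" unfolding ev_def by blast
  from assms(1) obtain b where "a < b" unfolding no_greatest_def by blast
  moreover from assms(1) obtain c where "b < c" unfolding no_greatest_def by blast
  ultimately show ?thesis using a by (meson order.strict_trans)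
qed

lemma ev_beyond: assumes "no_greatest TYPE('i::wellorder)" "ev (P::'i \<Rightarrow> bool)"
  shows "\<exists>\<rho>. \<rho>0 < \<rho> \<and> P \<rho>"
proof -
  from assms(2) obtain a where a: "\<forall>\<rho>. a < \<rho> \<longrightarrow> P \<rho>" unfolding ev_def by blast
  from assms(1) obtain b where "max a \<rho>0 < b" unfolding no_greatest_def by blast
  then show ?thesis using a by auto
qed

lemma nsmul_0[simp]: "nsmul 0 x = 0" by (simp add: nsmul_def)
lemma nsmul_Suc: "nsmul (Suc n) x = x + nsmul n x" by (simp add: nsmul_def add.commute)
lemma nsmul_add: "nsmul (m+n) x = nsmul m x + nsmul n x"
  by (induction m) (simp_all add: nsmul_Suc add.assoc)
lemma nsmul_mono: "x \<le> y \<Longrightarrow> nsmul n x \<le> nsmul n (y::'g::ordered_ab_group_add)"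
  by (induction n) (simp_all add: nsmul_Suc add_mono)
lemma nsmul_strict: assumes "x < y" "n \<ge> 1" shows "nsmul n x < nsmul n (y::'g::linordered_ab_group_add)"
  using assms(2)
proof (induction n)
  case 0 then show ?case by simp
next
  case (Suc n)
  have "nsmul n x \<le> nsmul n y" using assms(1) by (simp add: nsmul_mono)
  then show ?case using assms(1) by (simp add: nsmul_Suc add_less_le_mono)
qed

lemma v_mult: "valuation v \<Longrightarrow> x\<noteq>0 \<Longrightarrow> y\<noteq>0 \<Longrightarrow> v (x*y) = v x + v y"
  by (simp add: valuation_def)

lemma v_one: assumes "valuation v" shows "v 1 = 0"
  using v_mult[OF assms, of 1 1] by simp

lemma double_zero: assumes that: "(x::'g::linordered_ab_group_add) + x = 0" shows "x = 0"
proof (cases x "0::'g" rule: linorder_cases)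
  case less then have "x + x < 0" by (rule add_neg_neg[OF _ less])
  then show ?thesis using that by simp
next
  case greater then have "0 < x + x" by (rule add_pos_pos[OF _ greater])
  then show ?thesis using that by simp
qed auto

lemma v_neg1: assumes "valuation v" shows "v (-1) = 0"
proof -
  have "v ((-1)*(-1)) = v (-1) + v (-1)" using v_mult[OF assms, of "-1" "-1"] by simp
  then have "v (-1) + v (-1) = 0" using v_one[OF assms] by simp
  then show ?thesis by (rule double_zero)
qed

lemma v_uminus: assumes "valuation v" shows "v (-x) = v x"
proof (cases "x = 0")
  case False
  have "v ((-1)*x) = v (-1) + v x" using v_mult[OF assms, of "-1" x] False by simp
  then show ?thesis using v_neg1[OF assms] by simp
qed simp

lemma v_diff_commute: assumes "valuation v" shows "v (x - y) = v (y - x)"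
  using v_uminus[OF assms, of "x - y"] by simp

lemma v_inverse: assumes "valuation v" "x \<noteq> 0" shows "v (inverse x) = - v x"
proof -
  have "v (x * inverse x) = v x + v (inverse x)" using v_mult[OF assms(1), of x "inverse x"] assms(2) by simp
  then have "v x + v (inverse x) = 0" using v_one[OF assms(1)] assms(2) by simp
  then show ?thesis by (simp add: eq_neg_iff_add_eq_0 add.commute)
qed

lemma v_power: assumes "valuation v" "x \<noteq> 0" shows "v (x^n) = nsmul n (v x)"
  by (induction n) (simp_all add: v_one[OF assms(1)] v_mult[OF assms(1)] assms(2) nsmul_Suc)

lemma ultra: assumes val: "valuation v" and "x\<noteq>0" "y\<noteq>0" "v x < v y"
  shows "x + y \<noteq> 0 \<and> v (x+y) = v x"
proof
  show nz: "x + y \<noteq> 0"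
  proof
    assume "x + y = 0" then have "y = -x" by (simp add: eq_neg_iff_add_eq_0 add.commute)
    then show False using assms v_uminus[OF val, of x] by simp
  qed
  have le: "min (v x) (v y) \<le> v (x + y)" using val assms nz unfolding valuation_def by blast
  show "v (x+y) = v x"
  proof (rule ccontr)
    assume "v (x+y) \<noteq> v x"
    with le assms have gt: "v x < v (x+y)" by auto
    have "min (v (x+y)) (v (-y)) \<le> v ((x+y) + (-y))"
      using val nz assms unfolding valuation_def by (metis add_diff_cancel diff_conv_add_uminus neg_equal_0_iff_equal)
    then show False using gt assms v_uminus[OF val, of y] by (simp add: min_def split: if_splits)
  qed
qed

lemma v_term: assumes "valuation v" "c \<noteq> 0" "e \<noteq> 0"
  shows "c * e^j \<noteq> 0 \<and> v (c * e^j) = v c + nsmul j (v e)"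
  using assms by (simp add: v_mult v_power)



lemma cmp_lt:
  fixes g :: "'i::wellorder \<Rightarrow> 'g::linordered_ab_group_add"
  assumes idx: "no_greatest TYPE('i)" and sm: "smono g" and ik: "i < k"
  shows "ev (\<lambda>\<rho>. A + nsmul i (g \<rho>) < B + nsmul k (g \<rho>)) \<or> ev (\<lambda>\<rho>. B + nsmul k (g \<rho>) < A + nsmul i (g \<rho>))"
proof -
  define m where "m = k - i"
  have km: "k = i + m" and m1: "m \<ge> 1" using ik unfolding m_def by auto
  define h where "h \<rho> = B + nsmul m (g \<rho>)" for \<rho>
  have eq: "B + nsmul k (g \<rho>) = h \<rho> + nsmul i (g \<rho>)" for \<rho>
    unfolding h_def km nsmul_add by (simp add: add_ac)
  from sm obtain \<rho>0 where r0: "\<forall>\<rho> \<sigma>. \<rho>0 < \<rho> \<and> \<rho> < \<sigma> \<longrightarrow> g \<rho> < g \<sigma>" unfolding smono_def by blast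
  have hm: "\<rho>0 < \<rho> \<Longrightarrow> \<rho> < \<sigma> \<Longrightarrow> h \<rho> < h \<sigma>" for \<rho> \<sigma>
    unfolding h_def using r0 nsmul_strict[OF _ m1] by auto
  show ?thesis
  proof (cases "\<exists>\<rho>. \<rho>0 < \<rho> \<and> A < h \<rho>")
    case True
    then obtain \<rho> where "\<rho>0 < \<rho>" "A < h \<rho>" by blast
    then have "ev (\<lambda>\<sigma>. A < h \<sigma>)" unfolding ev_def
    proof (intro exI[of _ \<rho>] allI impI)
      fix \<sigma> assume "\<rho> < \<sigma>"
      then have "h \<rho> < h \<sigma>" using hm \<open>\<rho>0 < \<rho>\<close> by blast
      then show "A < h \<sigma>" using \<open>A < h \<rho>\<close> by (rule less_trans[rotated])
    qed
    then show ?thesis unfolding eq by simp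
  next
    case False
    have "ev (\<lambda>\<sigma>. h \<sigma> < A)" unfolding ev_def
    proof (intro exI[of _ \<rho>0] allI impI)
      fix \<rho> assume "\<rho>0 < \<rho>"
      from idx obtain \<tau> where "\<rho> < \<tau>" unfolding no_greatest_def by blast
      have 1: "h \<rho> < h \<tau>" using hm[OF \<open>\<rho>0 < \<rho>\<close> \<open>\<rho> < \<tau>\<close>] .
      have "\<rho>0 < \<tau>" using \<open>\<rho>0 < \<rho>\<close> \<open>\<rho> < \<tau>\<close> by (rule less_trans)
      then have 2: "h \<tau> \<le> A" using False by (meson leI)
      show "h \<rho> < A" using 1 2 by (rule less_le_trans)
    qed
    then show ?thesis unfolding eq by simp
  qed
qed

lemma cmp_ne:
  fixes g :: "'i::wellorder \<Rightarrow> 'g::linordered_ab_group_add"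
  assumes idx: "no_greatest TYPE('i)" and sm: "smono g" and ik: "i \<noteq> k"
  shows "ev (\<lambda>\<rho>. A + nsmul i (g \<rho>) < B + nsmul k (g \<rho>)) \<or> ev (\<lambda>\<rho>. B + nsmul k (g \<rho>) < A + nsmul i (g \<rho>))"
proof (cases "i < k")
  case True then show ?thesis using cmp_lt[OF idx sm] by blast
next
  case False then have "k < i" using ik by simp
  then show ?thesis using cmp_lt[OF idx sm, of k i B A] by blast
qed

lemma sum_dom:
  fixes v :: "'l::field \<Rightarrow> 'g::linordered_ab_group_add" and e :: "'i::wellorder \<Rightarrow> 'l"
  assumes val: "valuation v" and idx: "no_greatest TYPE('i)" and sm: "smono (\<lambda>\<rho>. v (e \<rho>))"
    and enz: "\<forall>\<rho>. e \<rho> \<noteq> 0"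
    and fin: "finite J" and ne: "J \<noteq> {}" and cnz: "\<forall>j\<in>J. c j \<noteq> 0"
  shows "\<exists>i\<in>J. ev (\<lambda>\<rho>. (\<Sum>j\<in>J. c j * e \<rho> ^ j) \<noteq> 0 \<and>
             v (\<Sum>j\<in>J. c j * e \<rho> ^ j) = v (c i) + nsmul i (v (e \<rho>)))"
  using fin ne cnz
proof (induction J rule: finite_ne_induct)
  case (singleton k)
  have ck: "c k \<noteq> 0" using singleton by simp
  show ?case
  proof (rule bexI[of _ k])
    show "ev (\<lambda>\<rho>. (\<Sum>j\<in>{k}. c j * e \<rho> ^ j) \<noteq> 0 \<and>
             v (\<Sum>j\<in>{k}. c j * e \<rho> ^ j) = v (c k) + nsmul k (v (e \<rho>)))"
      by (rule ev_True) (simp add: v_term[OF val ck] enz ck)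
  qed simp
next
  case (insert k J)
  then obtain i where iJ: "i \<in> J" and evi: "ev (\<lambda>\<rho>. (\<Sum>j\<in>J. c j * e \<rho> ^ j) \<noteq> 0 \<and>
             v (\<Sum>j\<in>J. c j * e \<rho> ^ j) = v (c i) + nsmul i (v (e \<rho>)))" by auto
  have ik: "i \<noteq> k" using iJ insert by auto
  have ck: "c k \<noteq> 0" using insert by auto
  have tk: "c k * e \<rho> ^ k \<noteq> 0 \<and> v (c k * e \<rho> ^ k) = v (c k) + nsmul k (v (e \<rho>))" for \<rho>
    using v_term[OF val ck] enz by auto
  have sumeq: "(\<Sum>j\<in>insert k J. c j * e \<rho> ^ j) = (\<Sum>j\<in>J. c j * e \<rho> ^ j) + c k * e \<rho> ^ k" for \<rho>
    using insert by (simp add: add.commute)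
  from cmp_ne[OF idx sm ik, of "v (c i)" "v (c k)"]
  show ?case
  proof
    assume lt: "ev (\<lambda>\<rho>. v (c i) + nsmul i (v (e \<rho>)) < v (c k) + nsmul k (v (e \<rho>)))"
    have "ev (\<lambda>\<rho>. (\<Sum>j\<in>insert k J. c j * e \<rho> ^ j) \<noteq> 0 \<and>
             v (\<Sum>j\<in>insert k J. c j * e \<rho> ^ j) = v (c i) + nsmul i (v (e \<rho>)))"
      using ev_conj[OF evi lt] 
    proof (rule ev_mono)
      fix \<rho> assume h: "((\<Sum>j\<in>J. c j * e \<rho> ^ j) \<noteq> 0 \<and>
             v (\<Sum>j\<in>J. c j * e \<rho> ^ j) = v (c i) + nsmul i (v (e \<rho>))) \<and>
             v (c i) + nsmul i (v (e \<rho>)) < v (c k) + nsmul k (v (e \<rho>))"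
      then show "(\<Sum>j\<in>insert k J. c j * e \<rho> ^ j) \<noteq> 0 \<and>
             v (\<Sum>j\<in>insert k J. c j * e \<rho> ^ j) = v (c i) + nsmul i (v (e \<rho>))"
        unfolding sumeq using ultra[OF val, of "\<Sum>j\<in>J. c j * e \<rho> ^ j" "c k * e \<rho> ^ k"] tk[of \<rho>]
        by simp
    qed
    then show ?thesis using iJ by blast
  next
    assume lt: "ev (\<lambda>\<rho>. v (c k) + nsmul k (v (e \<rho>)) < v (c i) + nsmul i (v (e \<rho>)))"
    have "ev (\<lambda>\<rho>. (\<Sum>j\<in>insert k J. c j * e \<rho> ^ j) \<noteq> 0 \<and>
             v (\<Sum>j\<in>insert k J. c j * e \<rho> ^ j) = v (c k) + nsmul k (v (e \<rho>)))"
      using ev_conj[OF evi lt] 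
    proof (rule ev_mono)
      fix \<rho> assume h: "((\<Sum>j\<in>J. c j * e \<rho> ^ j) \<noteq> 0 \<and>
             v (\<Sum>j\<in>J. c j * e \<rho> ^ j) = v (c i) + nsmul i (v (e \<rho>))) \<and>
             v (c k) + nsmul k (v (e \<rho>)) < v (c i) + nsmul i (v (e \<rho>))"
      then show "(\<Sum>j\<in>insert k J. c j * e \<rho> ^ j) \<noteq> 0 \<and>
             v (\<Sum>j\<in>insert k J. c j * e \<rho> ^ j) = v (c k) + nsmul k (v (e \<rho>))"
        unfolding sumeq using ultra[OF val, of "c k * e \<rho> ^ k" "\<Sum>j\<in>J. c j * e \<rho> ^ j"] tk[of \<rho>]
        by (simp add: add.commute)
    qed
    then show ?thesis by blast
  qed
qed

lemma taylor_val:
  fixes v :: "'l::field \<Rightarrow> 'g::linordered_ab_group_add" and s :: "'i::wellorder \<Rightarrow> 'l"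
  assumes val: "valuation v" and idx: "no_greatest TYPE('i)" and sm: "smono (\<lambda>\<rho>. v (s \<rho> - a))"
    and snz: "\<forall>\<rho>. s \<rho> \<noteq> a" and deg: "degree S \<ge> 1"
  shows "\<exists>b i. b \<noteq> 0 \<and> i \<ge> 1 \<and> ev (\<lambda>\<rho>. poly S (s \<rho>) - poly S a \<noteq> 0 \<and>
            v (poly S (s \<rho>) - poly S a) = v b + nsmul i (v (s \<rho> - a)))"
proof -
  define T where "T = pcompose S [:a, 1:]"
  have polyT: "poly T y = poly S (a + y)" for y unfolding T_def by (simp add: poly_pcompose)
  have degT: "degree T = degree S" unfolding T_def by (simp add: degree_pcompose)
  define d where "d = degree T"
  have d1: "d \<ge> 1" using deg degT d_def by simp
  have Tnz: "T \<noteq> 0" using d1 d_def by auto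
  have cd: "coeff T d \<noteq> 0" using Tnz d_def by simp
  define J where "J = {j \<in> {1..d}. coeff T j \<noteq> 0}"
  have finJ: "finite J" unfolding J_def by simp
  have dJ: "d \<in> J" unfolding J_def using d1 cd by simp
  have "poly T 0 = poly S a" using polyT[of 0] by simp
  then have c0: "coeff T 0 = poly S a" unfolding poly_0_coeff_0 by simp
  have key: "poly S x - poly S a = (\<Sum>j\<in>J. coeff T j * (x - a) ^ j)" for x
  proof -
    define f where "f j = coeff T j * (x - a) ^ j" for j
    have 1: "poly S x = poly T (x - a)" using polyT[of "x - a"] by simp
    have 2: "poly T (x - a) = (\<Sum>j\<le>d. f j)" unfolding d_def f_def by (rule poly_altdef)
    have e: "{..d} = insert 0 {1..d}" by auto
    have 3: "(\<Sum>j\<le>d. f j) = (\<Sum>j\<in>insert 0 {1..d}. f j)" by (simp only: e)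
    have 4: "(\<Sum>j\<in>insert 0 {1..d}. f j) = f 0 + (\<Sum>j\<in>{1..d}. f j)"
      by (rule sum.insert) auto
    have 5: "(\<Sum>j\<in>{1..d}. f j) = (\<Sum>j\<in>J. f j)"
      unfolding J_def f_def by (rule sum.mono_neutral_right) auto
    have 6: "f 0 = poly S a" unfolding f_def using c0 by simp
    show ?thesis unfolding 1 2 3 4 5 6 f_def using c0 by simp
  qed
  have enz: "\<forall>\<rho>. s \<rho> - a \<noteq> 0" using snz by simp
  have Jne: "J \<noteq> {}" using dJ by auto
  have cnz: "\<forall>j\<in>J. coeff T j \<noteq> 0" unfolding J_def by simp
  obtain i where iJ: "i \<in> J" and ev: "ev (\<lambda>\<rho>. (\<Sum>j\<in>J. coeff T j * (s \<rho> - a) ^ j) \<noteq> 0 \<and>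
             v (\<Sum>j\<in>J. coeff T j * (s \<rho> - a) ^ j) = v (coeff T i) + nsmul i (v (s \<rho> - a)))"
    using sum_dom[OF val idx sm enz finJ Jne cnz] by blast
  have i1: "i \<ge> 1" and ci: "coeff T i \<noteq> 0" using iJ unfolding J_def by auto
  have ev': "ev (\<lambda>\<rho>. poly S (s \<rho>) - poly S a \<noteq> 0 \<and>
            v (poly S (s \<rho>) - poly S a) = v (coeff T i) + nsmul i (v (s \<rho> - a)))"
    using ev by (simp only: key)
  show ?thesis using i1 ci ev' by blast
qed



definition incr :: "('l::field \<Rightarrow> 'g::linordered_ab_group_add) \<Rightarrow> ('i::wellorder \<Rightarrow> 'l) \<Rightarrow> bool" where
  "incr v x \<longleftrightarrow> (\<exists>\<rho>0. \<forall>\<rho> \<sigma>. \<rho>0 < \<rho> \<and> \<rho> < \<sigma> \<longrightarrow> x \<rho> \<noteq> 0 \<and> x \<sigma> \<noteq> 0 \<and> v (x \<rho>) < v (x \<sigma>))"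

lemma incr_of:
  fixes g :: "'i::wellorder \<Rightarrow> 'g::linordered_ab_group_add"
  assumes sm: "smono g" and i1: "i \<ge> 1" and e: "ev (\<lambda>\<rho>. x \<rho> \<noteq> 0 \<and> v (x \<rho>) = \<beta> + nsmul i (g \<rho>))"
  shows "incr v x"
proof -
  from sm obtain a where a: "\<forall>\<rho> \<sigma>. a < \<rho> \<and> \<rho> < \<sigma> \<longrightarrow> g \<rho> < g \<sigma>" unfolding smono_def by blast
  from e obtain b where b: "\<forall>\<rho>. b < \<rho> \<longrightarrow> x \<rho> \<noteq> 0 \<and> v (x \<rho>) = \<beta> + nsmul i (g \<rho>)" unfolding ev_def by blast
  show ?thesis unfolding incr_def
  proof (intro exI[of _ "max a b"] allI impI)
    fix \<rho> \<sigma> :: 'i assume h: "max a b < \<rho> \<and> \<rho> < \<sigma>"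
    then have "g \<rho> < g \<sigma>" using a by auto
    then have "nsmul i (g \<rho>) < nsmul i (g \<sigma>)" using nsmul_strict i1 by blast
    moreover have "b < \<rho>" "b < \<sigma>" using h by auto
    ultimately show "x \<rho> \<noteq> 0 \<and> x \<sigma> \<noteq> 0 \<and> v (x \<rho>) < v (x \<sigma>)" using b by auto
  qed
qed

lemma incr_ev: "incr v x \<Longrightarrow> no_greatest TYPE('i::wellorder) \<Longrightarrow> ev (\<lambda>\<rho>::'i. x \<rho> \<noteq> 0)"
  unfolding incr_def ev_def no_greatest_def by blast

lemma incr_v_const:
  assumes idx: "no_greatest TYPE('i::wellorder)" and inc: "incr v (x :: 'i \<Rightarrow> 'l::field)"
    and e: "ev (\<lambda>\<rho>. v (x \<rho>) = k)"
  shows False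
proof -
  from inc obtain a where a: "\<forall>\<rho> \<sigma>. a < \<rho> \<and> \<rho> < \<sigma> \<longrightarrow> x \<rho> \<noteq> 0 \<and> x \<sigma> \<noteq> 0 \<and> v (x \<rho>) < v (x \<sigma>)"
    unfolding incr_def by blast
  have "ev (\<lambda>\<rho>. a < \<rho> \<and> v (x \<rho>) = k)" using ev_conj[OF _ e, of "\<lambda>\<rho>. a < \<rho>"] unfolding ev_def by blast
  then obtain \<rho> \<sigma> where "\<rho> < \<sigma>" "a < \<rho>" "v (x \<rho>) = k" "v (x \<sigma>) = k" using ev_two[OF idx] by blast
  then show False using a by force
qed

lemma incr_vext_const:
  assumes idx: "no_greatest TYPE('i::wellorder)" and inc: "incr v (x :: 'i \<Rightarrow> 'l::field)"
    and e: "ev (\<lambda>\<rho>. vext v (x \<rho>) = k)"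
  shows False
proof -
  have "ev (\<lambda>\<rho>. v (x \<rho>) = the k)" using ev_conj[OF incr_ev[OF inc idx] e]
    by (rule ev_mono) (auto simp: vext_def)
  then show False using incr_v_const[OF idx inc] by blast
qed

lemma pconv_of_incr:
  assumes val: "valuation v" and inc: "incr v (\<lambda>\<rho>. y \<rho> - b)"
  shows "pseudoconverges v y b"
proof -
  from inc obtain a where a: "\<forall>\<rho> \<sigma>. a < \<rho> \<and> \<rho> < \<sigma> \<longrightarrow> y \<rho> - b \<noteq> 0 \<and> y \<sigma> - b \<noteq> 0 \<and> v (y \<rho> - b) < v (y \<sigma> - b)"
    unfolding incr_def by blast
  show ?thesis unfolding pseudoconverges_def vprec_def
  proof (intro exI[of _ a] allI impI)
    fix \<rho> \<sigma> assume h: "a < \<rho> \<and> \<rho> < \<sigma>"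
    then show "b - y \<rho> \<noteq> 0 \<and> (b - y \<sigma> = 0 \<or> v (b - y \<rho>) < v (b - y \<sigma>))"
      using a v_diff_commute[OF val, of b "y \<rho>"] v_diff_commute[OF val, of b "y \<sigma>"] by force
  qed
qed

lemma pc_of_incr:
  assumes val: "valuation v" and inc: "incr v (\<lambda>\<rho>. y \<rho> - b)"
  shows "pseudocauchy v y"
proof -
  from inc obtain a where a: "\<forall>\<rho> \<sigma>. a < \<rho> \<and> \<rho> < \<sigma> \<longrightarrow> y \<rho> - b \<noteq> 0 \<and> y \<sigma> - b \<noteq> 0 \<and> v (y \<rho> - b) < v (y \<sigma> - b)"
    unfolding incr_def by blast
  have step: "y \<sigma> - y \<rho> \<noteq> 0 \<and> v (y \<sigma> - y \<rho>) = v (y \<rho> - b)" if "a < \<rho>" "\<rho> < \<sigma>" for \<rho> \<sigma>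
  proof -
    have h: "y \<rho> - b \<noteq> 0" "y \<sigma> - b \<noteq> 0" "v (y \<rho> - b) < v (y \<sigma> - b)" using a that by auto
    have eq: "y \<sigma> - y \<rho> = (- (y \<rho> - b)) + (y \<sigma> - b)" by simp
    have "v (- (y \<rho> - b)) < v (y \<sigma> - b)" using h v_uminus[OF val, of "y \<rho> - b"] by simp
    then show ?thesis unfolding eq using ultra[OF val, of "- (y \<rho> - b)" "y \<sigma> - b"] h v_uminus[OF val, of "y \<rho> - b"] by simp
  qed
  show ?thesis unfolding pseudocauchy_def vprec_def
  proof (intro exI[of _ a] allI impI)
    fix \<rho> \<sigma> \<tau> assume h: "a < \<rho> \<and> \<rho> < \<sigma> \<and> \<sigma> < \<tau>"
    then have "a < \<sigma>" by auto
    then show "y \<sigma> - y \<rho> \<noteq> 0 \<and> (y \<tau> - y \<sigma> = 0 \<or> v (y \<sigma> - y \<rho>) < v (y \<tau> - y \<sigma>))"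
      using step[of \<rho> \<sigma>] step[of \<sigma> \<tau>] h a by auto
  qed
qed

lemma incr_of_pconv:
  assumes idx: "no_greatest TYPE('i::wellorder)" and pc: "pseudoconverges v (y :: 'i \<Rightarrow> 'l::field) c"
  shows "incr v (\<lambda>\<rho>. c - y \<rho>)"
proof -
  from pc obtain a where a: "\<forall>\<rho> \<sigma>. a < \<rho> \<and> \<rho> < \<sigma> \<longrightarrow> vprec v (c - y \<sigma>) (c - y \<rho>)"
    unfolding pseudoconverges_def by blast
  show ?thesis unfolding incr_def
  proof (intro exI[of _ a] allI impI)
    fix \<rho> \<sigma> assume h: "a < \<rho> \<and> \<rho> < \<sigma>"
    obtain \<tau> where "\<sigma> < \<tau>" using idx unfolding no_greatest_def by blast
    then have "c - y \<sigma> \<noteq> 0" using a h unfolding vprec_def by (meson order.strict_trans)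
    then show "c - y \<rho> \<noteq> 0 \<and> c - y \<sigma> \<noteq> 0 \<and> v (c - y \<rho>) < v (c - y \<sigma>)"
      using a h unfolding vprec_def by blast
  qed
qed

lemma subfield_add: "subfield K \<Longrightarrow> x \<in> K \<Longrightarrow> y \<in> K \<Longrightarrow> x + y \<in> K" unfolding subfield_def by blast
lemma subfield_mult: "subfield K \<Longrightarrow> x \<in> K \<Longrightarrow> y \<in> K \<Longrightarrow> x * y \<in> K" unfolding subfield_def by blast
lemma subfield_uminus: "subfield K \<Longrightarrow> x \<in> K \<Longrightarrow> - x \<in> K" unfolding subfield_def by blast
lemma subfield_inverse: "subfield K \<Longrightarrow> x \<in> K \<Longrightarrow> inverse x \<in> K" unfolding subfield_def by blast
lemma subfield_diff: "subfield K \<Longrightarrow> x \<in> K \<Longrightarrow> y \<in> K \<Longrightarrow> x - y \<in> K"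
  using subfield_add[of K x "-y"] subfield_uminus by fastforce
lemma subfield_divide: "subfield K \<Longrightarrow> x \<in> K \<Longrightarrow> y \<in> K \<Longrightarrow> x / y \<in> K"
  by (simp add: divide_inverse subfield_mult subfield_inverse)

lemma poly_over_pCons: "poly_over K (pCons c p) \<Longrightarrow> c \<in> K \<and> poly_over K p"
  unfolding poly_over_def by (metis coeff_pCons_0 coeff_pCons_Suc)

lemma poly_in_K: assumes "subfield K" shows "poly_over K P \<Longrightarrow> x \<in> K \<Longrightarrow> poly P x \<in> K"
proof (induction P rule: pCons_induct)
  case 0 then show ?case using assms unfolding subfield_def by simp
next
  case (pCons c p)
  then show ?case using poly_over_pCons[OF pCons.prems(1)] assms
    by (simp add: subfield_add subfield_mult)
qed

lemma poly_over_lin: "subfield K \<Longrightarrow> c \<in> K \<Longrightarrow> poly_over K (smult c Q - P) \<longleftrightarrow> True"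
  if "poly_over K Q" "poly_over K P"
  using that unfolding poly_over_def by (simp add: subfield_diff subfield_mult)

lemma deg0_poly: assumes "degree U = 0" shows "poly U x = coeff U 0"
proof -
  have "[:coeff U 0:] = U" by (rule degree_0_id[OF assms])
  then have "poly U x = poly [:coeff U 0:] x" by simp
  then show ?thesis by simp
qed

lemma tt_ev:
  assumes tt: "transcendental_type v K s" and U: "poly_over K U"
  shows "\<exists>c. ev (\<lambda>\<rho>. vext v (poly U (s \<rho>)) = c)"
proof (cases "degree U = 0")
  case True then show ?thesis by (intro exI ev_True) (simp add: deg0_poly)
next
  case False then show ?thesis using tt U unfolding transcendental_type_def ev_def by blast
qed

lemma vdist_down:
  assumes val: "valuation v" and subK: "subfield K" and d: "\<delta> \<in> value_group v K"
    and le: "\<delta> \<le> v (b - c)" and cK: "c \<in> K" and nz: "b - c \<noteq> 0"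
  shows "\<delta> \<in> vdist_set v b K"
proof (cases "\<delta> = v (b - c)")
  case True then show ?thesis unfolding vdist_set_def using cK nz by blast
next
  case False
  then have lt: "\<delta> < v (b - c)" using le by simp
  from d obtain e where eK: "e \<in> K" "e \<noteq> 0" "\<delta> = v e" unfolding value_group_def by blast
  have eq: "b - (c + e) = (- e) + (b - c)" by simp
  have "b - (c + e) \<noteq> 0 \<and> v (b - (c + e)) = v (- e)"
    unfolding eq using ultra[OF val, of "-e" "b - c"] v_uminus[OF val, of e] eK lt nz by simp
  moreover have "c + e \<in> K" using subfield_add[OF subK cK eK(1)] .
  ultimately have "\<delta> = v (b - (c + e)) \<and> c + e \<in> K \<and> b - (c + e) \<noteq> 0"
    using v_uminus[OF val, of e] eK by auto
  then show ?thesis unfolding vdist_set_def by blast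
qed



theorem lemma4p4:
  fixes v :: "'l::field \<Rightarrow> 'g::linordered_ab_group_add"
    and K :: "'l set"
    and s :: "'i::wellorder \<Rightarrow> 'l"
    and a :: 'l
    and P Q :: "'l poly"
  assumes val: "valuation v"
    and subK: "subfield K"
    and imm: "immediate_ext v K"
    and aK: "a \<notin> K"
    and idx: "no_greatest TYPE('i)"
    and sK: "\<forall>\<rho>. s \<rho> \<in> K"
    and pc: "pseudocauchy v s"
    and tt: "transcendental_type v K s"
    and conv: "pseudoconverges v s a"
    and PK: "poly_over K P" and QK: "poly_over K Q"
    and Qnz: "Q \<noteq> 0" and cop: "coprime P Q"
    and nonconst: "\<not> (\<exists>c. P = smult c Q)"
  shows "poly Q a \<noteq> 0 \<and>
    (\<exists>\<rho>0. \<forall>\<rho>. \<rho>0 < \<rho> \<longrightarrow> poly Q (s \<rho>) \<noteq> 0 \<and> rat_eval P Q (s \<rho>) \<in> K) \<and>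
    pseudoconverges v (\<lambda>\<rho>. rat_eval P Q (s \<rho>)) (rat_eval P Q a) \<and>
    (\<exists>\<alpha>\<in>value_group v K. \<exists>i::nat. i \<ge> 1 \<and>
       (\<exists>\<rho>1. \<forall>\<rho>. \<rho>1 < \<rho> \<longrightarrow>
          vext v (rat_eval P Q (s \<rho>) - rat_eval P Q a) = Some (\<alpha> + nsmul i (v (a - s \<rho>)))) \<and>
       (\<exists>\<rho>2. (\<forall>\<rho>. \<rho>2 < \<rho> \<longrightarrow>
                 \<alpha> + nsmul i (v (a - s \<rho>)) \<in> vdist_set v (rat_eval P Q a) K) \<and>
              (\<forall>\<delta>\<in>vdist_set v (rat_eval P Q a) K. \<exists>\<rho>. \<rho>2 < \<rho> \<and>
                 \<delta> \<le> \<alpha> + nsmul i (v (a - s \<rho>)))) \<and>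
       vdist_set v (rat_eval P Q a) K =
         downclosure (value_group v K) ((\<lambda>\<sigma>. \<alpha> + nsmul i \<sigma>) ` vdist_set v a K)) \<and>
    pseudocauchy v (\<lambda>\<rho>. rat_eval P Q (s \<rho>)) \<and>
    divergent_in v K (\<lambda>\<rho>. rat_eval P Q (s \<rho>))"
proof -
  define g where "g \<rho> = v (a - s \<rho>)" for \<rho>
  define R where "R = rat_eval P Q"
  have snz: "\<forall>\<rho>. s \<rho> \<noteq> a" using sK aK by metis
  have gsa: "v (s \<rho> - a) = g \<rho>" for \<rho> unfolding g_def by (rule v_diff_commute[OF val])
  have smg: "smono g"
  proof -
    from conv obtain r where r: "\<forall>\<rho> \<sigma>. r < \<rho> \<and> \<rho> < \<sigma> \<longrightarrow> vprec v (a - s \<sigma>) (a - s \<rho>)"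
      unfolding pseudoconverges_def by blast
    show ?thesis unfolding smono_def
    proof (intro exI[of _ r] allI impI)
      fix \<rho> \<sigma> assume "r < \<rho> \<and> \<rho> < \<sigma>"
      then have "vprec v (a - s \<sigma>) (a - s \<rho>)" using r by blast
      moreover have "a - s \<sigma> \<noteq> 0" using snz[rule_format, of \<sigma>] by auto
      ultimately show "g \<rho> < g \<sigma>" unfolding vprec_def g_def by auto
    qed
  qed
  have sms: "smono (\<lambda>\<rho>. v (s \<rho> - a))" using smg by (simp add: gsa)
  have tt': "\<exists>c. ev (\<lambda>\<rho>. vext v (poly U (s \<rho>)) = c)" if "poly_over K U" for U
    using tt_ev[OF tt that] .
  have Qa: "poly Q a \<noteq> 0"
  proof
    assume Q0: "poly Q a = 0"
    show False
    proof (cases "degree Q = 0")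
      case True then have "poly Q a = coeff Q 0" by (rule deg0_poly)
      moreover have "coeff Q 0 \<noteq> 0" using True Qnz by (metis leading_coeff_0_iff)
      ultimately show False using Q0 by simp
    next
      case False
      then obtain b i where bi: "b \<noteq> 0" "i \<ge> 1" "ev (\<lambda>\<rho>. poly Q (s \<rho>) - poly Q a \<noteq> 0 \<and>
            v (poly Q (s \<rho>) - poly Q a) = v b + nsmul i (v (s \<rho> - a)))"
        using taylor_val[OF val idx sms snz, of Q] by auto
      have "ev (\<lambda>\<rho>. poly Q (s \<rho>) \<noteq> 0 \<and> v (poly Q (s \<rho>)) = v b + nsmul i (v (s \<rho> - a)))"
        using bi(3) Q0 by simp
      then have "incr v (\<lambda>\<rho>. poly Q (s \<rho>))" by (rule incr_of[OF sms bi(2)])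
      then show False using tt'[OF QK] incr_vext_const[OF idx] by blast
    qed
  qed
  have Qev: "\<exists>cq. ev (\<lambda>\<rho>. poly Q (s \<rho>) \<noteq> 0 \<and> v (poly Q (s \<rho>)) = cq)"
  proof (cases "degree Q = 0")
    case True
    have "coeff Q 0 \<noteq> 0" using True Qnz by (metis leading_coeff_0_iff)
    then show ?thesis using deg0_poly[OF True] by (intro exI[of _ "v (coeff Q 0)"] ev_True) simp
  next
    case False
    then obtain b i where bi: "b \<noteq> 0" "i \<ge> 1" "ev (\<lambda>\<rho>. poly Q (s \<rho>) - poly Q a \<noteq> 0 \<and>
            v (poly Q (s \<rho>) - poly Q a) = v b + nsmul i (v (s \<rho> - a)))"
      using taylor_val[OF val idx sms snz, of Q] by auto
    have inc: "incr v (\<lambda>\<rho>. poly Q (s \<rho>) - poly Q a)" using incr_of[OF sms bi(2) bi(3)] .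
    then obtain r where r: "\<forall>\<rho> \<sigma>. r < \<rho> \<and> \<rho> < \<sigma> \<longrightarrow> poly Q (s \<rho>) - poly Q a \<noteq> 0 \<and>
        poly Q (s \<sigma>) - poly Q a \<noteq> 0 \<and> v (poly Q (s \<rho>) - poly Q a) < v (poly Q (s \<sigma>) - poly Q a)"
      unfolding incr_def by blast
    have nz: "ev (\<lambda>\<rho>. poly Q (s \<rho>) \<noteq> 0)"
    proof (cases "\<exists>\<rho>. r < \<rho> \<and> poly Q (s \<rho>) = 0")
      case True
      then obtain \<rho> where \<rho>: "r < \<rho>" "poly Q (s \<rho>) = 0" by blast
      show ?thesis unfolding ev_def
      proof (intro exI[of _ \<rho>] allI impI notI)
        fix \<sigma> assume "\<rho> < \<sigma>" "poly Q (s \<sigma>) = 0"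
        then have "v (poly Q (s \<rho>) - poly Q a) < v (poly Q (s \<sigma>) - poly Q a)" using r \<rho> by blast
        then show False using \<rho> \<open>poly Q (s \<sigma>) = 0\<close> by simp
      qed
    next
      case False then show ?thesis unfolding ev_def by blast
    qed
    obtain c where c: "ev (\<lambda>\<rho>. vext v (poly Q (s \<rho>)) = c)" using tt'[OF QK] by blast
    have "ev (\<lambda>\<rho>. poly Q (s \<rho>) \<noteq> 0 \<and> v (poly Q (s \<rho>)) = the c)"
      using ev_conj[OF nz c] by (rule ev_mono) (auto simp: vext_def)
    then show ?thesis by blast
  qed
  then obtain cq where cq: "ev (\<lambda>\<rho>. poly Q (s \<rho>) \<noteq> 0 \<and> v (poly Q (s \<rho>)) = cq)" by blast
  define S where "S = smult (poly Q a) P - smult (poly P a) Q"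
  have polyS: "poly S x = poly P x * poly Q a - poly Q x * poly P a" for x
    unfolding S_def by (simp add: algebra_simps)
  have Sa: "poly S a = 0" using polyS by simp
  have Snz: "S \<noteq> 0"
  proof
    assume "S = 0"
    then have "smult (poly Q a) P = smult (poly P a) Q" unfolding S_def by simp
    then have "smult (inverse (poly Q a)) (smult (poly Q a) P) = smult (inverse (poly Q a)) (smult (poly P a) Q)"
      by simp
    then have "P = smult (inverse (poly Q a) * poly P a) Q" using Qa by simp
    then show False using nonconst by blast
  qed
  have degS: "degree S \<ge> 1"
  proof (rule ccontr)
    assume "\<not> degree S \<ge> 1"
    then have d0: "degree S = 0" by simp
    then have "coeff S 0 = 0" using deg0_poly[OF d0, of a] Sa by simp
    then show False using Snz d0 by (metis leading_coeff_0_iff)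
  qed
  obtain b i where bi: "b \<noteq> 0" "i \<ge> 1" "ev (\<lambda>\<rho>. poly S (s \<rho>) - poly S a \<noteq> 0 \<and>
            v (poly S (s \<rho>) - poly S a) = v b + nsmul i (v (s \<rho> - a)))"
    using taylor_val[OF val idx sms snz degS] by auto
  have i1: "i \<ge> 1" by (rule bi(2))
  have evS: "ev (\<lambda>\<rho>. poly S (s \<rho>) \<noteq> 0 \<and> v (poly S (s \<rho>)) = v b + nsmul i (g \<rho>))"
    using bi(3) by (simp add: Sa gsa)
  have ident: "R x - R a = poly S x * inverse (poly Q x * poly Q a)" if "poly Q x \<noteq> 0" for x
    unfolding R_def rat_eval_def polyS using that Qa by (simp add: field_simps)
  define \<alpha> where "\<alpha> = v b + - (cq + v (poly Q a))"
  have Dev: "ev (\<lambda>\<rho>. poly Q (s \<rho>) \<noteq> 0 \<and> R (s \<rho>) - R a \<noteq> 0 \<and> v (R (s \<rho>) - R a) = \<alpha> + nsmul i (g \<rho>))"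
    using ev_conj[OF evS cq]
  proof (rule ev_mono)
    fix \<rho> assume h: "(poly S (s \<rho>) \<noteq> 0 \<and> v (poly S (s \<rho>)) = v b + nsmul i (g \<rho>)) \<and>
       poly Q (s \<rho>) \<noteq> 0 \<and> v (poly Q (s \<rho>)) = cq"
    have nz2: "poly Q (s \<rho>) * poly Q a \<noteq> 0" using h Qa by simp
    have nz3: "inverse (poly Q (s \<rho>) * poly Q a) \<noteq> 0" using nz2 by simp
    have "v (R (s \<rho>) - R a) = v (poly S (s \<rho>)) + v (inverse (poly Q (s \<rho>) * poly Q a))"
      unfolding ident[OF h[THEN conjunct2, THEN conjunct1]] using v_mult[OF val] h nz3 by simp
    also have "\<dots> = v b + nsmul i (g \<rho>) + - (cq + v (poly Q a))"
      using h v_inverse[OF val nz2] v_mult[OF val, of "poly Q (s \<rho>)" "poly Q a"] Qa by simp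
    also have "\<dots> = \<alpha> + nsmul i (g \<rho>)" unfolding \<alpha>_def by (simp add: add_ac)
    finally show "poly Q (s \<rho>) \<noteq> 0 \<and> R (s \<rho>) - R a \<noteq> 0 \<and> v (R (s \<rho>) - R a) = \<alpha> + nsmul i (g \<rho>)"
      using h nz3 ident by simp
  qed
  have Dev': "ev (\<lambda>\<rho>. R (s \<rho>) - R a \<noteq> 0 \<and> v (R (s \<rho>) - R a) = \<alpha> + nsmul i (g \<rho>))"
    using Dev by (rule ev_mono) simp
  obtain \<rho>1 where \<rho>1: "\<forall>\<rho>. \<rho>1 < \<rho> \<longrightarrow> poly Q (s \<rho>) \<noteq> 0 \<and> R (s \<rho>) - R a \<noteq> 0 \<and> v (R (s \<rho>) - R a) = \<alpha> + nsmul i (g \<rho>)"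
    using Dev unfolding ev_def by blast
  have vgK: "value_group v K = v ` (UNIV - {0})" using imm unfolding immediate_ext_def value_group_def by simp
  have \<alpha>K: "\<alpha> \<in> value_group v K"
  proof -
    obtain \<rho> where h: "poly Q (s \<rho>) \<noteq> 0 \<and> v (poly Q (s \<rho>)) = cq" using ev_two[OF idx cq] by blast
    have nz2: "poly Q (s \<rho>) * poly Q a \<noteq> 0" using h Qa by simp
    have nz3: "inverse (poly Q (s \<rho>) * poly Q a) \<noteq> 0" using nz2 by simp
    have "v (b * inverse (poly Q (s \<rho>) * poly Q a)) = \<alpha>"
      unfolding \<alpha>_def using v_mult[OF val, of b] bi(1) nz3 v_inverse[OF val nz2]
        v_mult[OF val, of "poly Q (s \<rho>)" "poly Q a"] h Qa by simp
    moreover have "b * inverse (poly Q (s \<rho>) * poly Q a) \<noteq> 0" using bi(1) nz3 by simp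
    ultimately show ?thesis unfolding vgK by (metis DiffI UNIV_I image_eqI singletonD)
  qed
  have RK: "R (s \<rho>) \<in> K" for \<rho>
    unfolding R_def rat_eval_def using poly_in_K[OF subK PK] poly_in_K[OF subK QK] sK subfield_divide[OF subK] by blast
  have incD: "incr v (\<lambda>\<rho>. R (s \<rho>) - R a)" using Dev' by (rule incr_of[OF smg i1])
  have div: "divergent_in v K (\<lambda>\<rho>. R (s \<rho>))"
    unfolding divergent_in_def
  proof
    assume "\<exists>c\<in>K. pseudoconverges v (\<lambda>\<rho>. R (s \<rho>)) c"
    then obtain c where cK: "c \<in> K" and pc': "pseudoconverges v (\<lambda>\<rho>. R (s \<rho>)) c" by blast
    have inc: "incr v (\<lambda>\<rho>. c - R (s \<rho>))" using incr_of_pconv[OF idx pc'] .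
    define U where "U = smult c Q - P"
    have UK: "poly_over K U" using PK QK cK subK unfolding U_def poly_over_def
      by (simp add: subfield_diff subfield_mult)
    obtain cu where cu: "ev (\<lambda>\<rho>. vext v (poly U (s \<rho>)) = cu)" using tt'[OF UK] by blast
    have "ev (\<lambda>\<rho>. v (c - R (s \<rho>)) = the cu + - cq)"
      using ev_conj[OF ev_conj[OF incr_ev[OF inc idx] cu] cq]
    proof (rule ev_mono)
      fix \<rho> assume h: "(c - R (s \<rho>) \<noteq> 0 \<and> vext v (poly U (s \<rho>)) = cu) \<and> poly Q (s \<rho>) \<noteq> 0 \<and> v (poly Q (s \<rho>)) = cq"
      have eq: "c - R (s \<rho>) = poly U (s \<rho>) * inverse (poly Q (s \<rho>))"
        unfolding U_def R_def rat_eval_def using h by (simp add: field_simps)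
      then have Unz: "poly U (s \<rho>) \<noteq> 0" using h by auto
      then have "cu = Some (v (poly U (s \<rho>)))" using h by (simp add: vext_def)
      moreover have "inverse (poly Q (s \<rho>)) \<noteq> 0" using h by simp
      ultimately show "v (c - R (s \<rho>)) = the cu + - cq"
        unfolding eq using v_mult[OF val] v_inverse[OF val] Unz h by simp
    qed
    then show False using incr_v_const[OF idx inc] by blast
  qed
  have evgt: "ev (\<lambda>\<rho>. N < \<rho>)" for N unfolding ev_def by blast
  have cof: "\<exists>\<rho>. N < \<rho> \<and> \<delta> \<le> \<alpha> + nsmul i (g \<rho>)" if \<delta>: "\<delta> \<in> vdist_set v (R a) K" for \<delta> N
  proof (rule ccontr)
    assume nex: "\<not> (\<exists>\<rho>. N < \<rho> \<and> \<delta> \<le> \<alpha> + nsmul i (g \<rho>))"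
    from \<delta> obtain c where c: "\<delta> = v (R a - c)" "c \<in> K" "R a - c \<noteq> 0" unfolding vdist_set_def by blast
    have "ev (\<lambda>\<rho>. R (s \<rho>) - c \<noteq> 0 \<and> v (R (s \<rho>) - c) = \<alpha> + nsmul i (g \<rho>))"
      using ev_conj[OF Dev' evgt[of N]]
    proof (rule ev_mono)
      fix \<rho> assume h: "(R (s \<rho>) - R a \<noteq> 0 \<and> v (R (s \<rho>) - R a) = \<alpha> + nsmul i (g \<rho>)) \<and> N < \<rho>"
      then have lt: "v (R (s \<rho>) - R a) < v (R a - c)" using nex c by (auto simp: not_le)
      have eq: "R (s \<rho>) - c = (R (s \<rho>) - R a) + (R a - c)" by simp
      show "R (s \<rho>) - c \<noteq> 0 \<and> v (R (s \<rho>) - c) = \<alpha> + nsmul i (g \<rho>)"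
        unfolding eq using ultra[OF val, of "R (s \<rho>) - R a" "R a - c"] lt h c by simp
    qed
    then have "incr v (\<lambda>\<rho>. R (s \<rho>) - c)" by (rule incr_of[OF smg i1])
    then have "pseudoconverges v (\<lambda>\<rho>. R (s \<rho>)) c" by (rule pconv_of_incr[OF val])
    then show False using div c(2) unfolding divergent_in_def by blast
  qed
  have cofa: "\<exists>\<rho>. N < \<rho> \<and> v (a - c) \<le> g \<rho>" if cK: "c \<in> K" for c N
  proof (rule ccontr)
    assume nex: "\<not> (\<exists>\<rho>. N < \<rho> \<and> v (a - c) \<le> g \<rho>)"
    have ac: "a - c \<noteq> 0" using aK cK by auto
    have "ev (\<lambda>\<rho>. s \<rho> - c \<noteq> 0 \<and> v (s \<rho> - c) = 0 + nsmul 1 (g \<rho>))"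
      using evgt[of N]
    proof (rule ev_mono)
      fix \<rho> assume h: "N < \<rho>"
      then have lt: "v (s \<rho> - a) < v (a - c)" using nex gsa by (auto simp: not_le)
      have eq: "s \<rho> - c = (s \<rho> - a) + (a - c)" by simp
      have "s \<rho> - a \<noteq> 0" using snz by simp
      then show "s \<rho> - c \<noteq> 0 \<and> v (s \<rho> - c) = 0 + nsmul 1 (g \<rho>)"
        unfolding eq using ultra[OF val, of "s \<rho> - a" "a - c"] lt ac gsa by (simp add: nsmul_Suc)
    qed
    then have inc: "incr v (\<lambda>\<rho>. s \<rho> - c)" by (rule incr_of[OF smg order.refl])
    define U where "U = [:- c, 1:]"
    have UK: "poly_over K U" unfolding U_def poly_over_def
    proof
      fix n show "coeff [:- c, 1:] n \<in> K"
        using subK cK by (cases n) (auto simp: subfield_def coeff_pCons split: nat.split)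
    qed
    obtain cu where cu: "ev (\<lambda>\<rho>. vext v (poly U (s \<rho>)) = cu)" using tt'[OF UK] by blast
    then have "ev (\<lambda>\<rho>. vext v (s \<rho> - c) = cu)" unfolding U_def by simp
    then show False using incr_vext_const[OF idx inc] by blast
  qed
  have mem: "\<alpha> + nsmul i (g \<rho>) \<in> vdist_set v (R a) K" if "\<rho>1 < \<rho>" for \<rho>
  proof -
    have "R (s \<rho>) - R a \<noteq> 0" "v (R (s \<rho>) - R a) = \<alpha> + nsmul i (g \<rho>)" using \<rho>1 that by auto
    then have "\<alpha> + nsmul i (g \<rho>) = v (R a - R (s \<rho>)) \<and> R (s \<rho>) \<in> K \<and> R a - R (s \<rho>) \<noteq> 0"
      using RK v_diff_commute[OF val, of "R a" "R (s \<rho>)"] by simp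
    then show ?thesis unfolding vdist_set_def by blast
  qed
  have seteq: "vdist_set v (R a) K = downclosure (value_group v K) ((\<lambda>\<sigma>. \<alpha> + nsmul i \<sigma>) ` vdist_set v a K)"
  proof
    show "vdist_set v (R a) K \<subseteq> downclosure (value_group v K) ((\<lambda>\<sigma>. \<alpha> + nsmul i \<sigma>) ` vdist_set v a K)"
    proof
      fix \<delta> assume \<delta>: "\<delta> \<in> vdist_set v (R a) K"
      then obtain c where c: "\<delta> = v (R a - c)" "c \<in> K" "R a - c \<noteq> 0" unfolding vdist_set_def by blast
      have \<delta>G: "\<delta> \<in> value_group v K" unfolding vgK using c by blast
      obtain \<rho> where \<rho>: "\<rho>1 < \<rho>" "\<delta> \<le> \<alpha> + nsmul i (g \<rho>)" using cof[OF \<delta>] by blast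
      have "g \<rho> \<in> vdist_set v a K" unfolding vdist_set_def g_def using sK snz by force
      then show "\<delta> \<in> downclosure (value_group v K) ((\<lambda>\<sigma>. \<alpha> + nsmul i \<sigma>) ` vdist_set v a K)"
        unfolding downclosure_def using \<delta>G \<rho> by blast
    qed
  next
    show "downclosure (value_group v K) ((\<lambda>\<sigma>. \<alpha> + nsmul i \<sigma>) ` vdist_set v a K) \<subseteq> vdist_set v (R a) K"
    proof
      fix \<delta> assume "\<delta> \<in> downclosure (value_group v K) ((\<lambda>\<sigma>. \<alpha> + nsmul i \<sigma>) ` vdist_set v a K)"
      then obtain \<sigma> where \<delta>G: "\<delta> \<in> value_group v K" and \<sigma>: "\<sigma> \<in> vdist_set v a K" and le: "\<delta> \<le> \<alpha> + nsmul i \<sigma>"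
        unfolding downclosure_def by blast
      from \<sigma> obtain c where c: "\<sigma> = v (a - c)" "c \<in> K" unfolding vdist_set_def by blast
      obtain \<rho> where \<rho>: "\<rho>1 < \<rho>" "v (a - c) \<le> g \<rho>" using cofa[OF c(2)] by blast
      have "\<alpha> + nsmul i \<sigma> \<le> \<alpha> + nsmul i (g \<rho>)" using c(1) \<rho>(2) nsmul_mono by (simp add: add_left_mono)
      also have "\<dots> = v (R a - R (s \<rho>))" using \<rho>1 \<rho>(1) v_diff_commute[OF val, of "R a" "R (s \<rho>)"] by simp
      finally have le2: "\<delta> \<le> v (R a - R (s \<rho>))" using le by simp
      have "R a - R (s \<rho>) \<noteq> 0" using \<rho>1 \<rho>(1) by auto
      then show "\<delta> \<in> vdist_set v (R a) K" using vdist_down[OF val subK \<delta>G le2 RK] by blast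
    qed
  qed
  have main: "poly Q a \<noteq> 0 \<and>
    (\<exists>\<rho>0. \<forall>\<rho>. \<rho>0 < \<rho> \<longrightarrow> poly Q (s \<rho>) \<noteq> 0 \<and> R (s \<rho>) \<in> K) \<and>
    pseudoconverges v (\<lambda>\<rho>. R (s \<rho>)) (R a) \<and>
    (\<exists>\<alpha>\<in>value_group v K. \<exists>i::nat. i \<ge> 1 \<and>
       (\<exists>\<rho>1. \<forall>\<rho>. \<rho>1 < \<rho> \<longrightarrow>
          vext v (R (s \<rho>) - R a) = Some (\<alpha> + nsmul i (v (a - s \<rho>)))) \<and>
       (\<exists>\<rho>2. (\<forall>\<rho>. \<rho>2 < \<rho> \<longrightarrow>
                 \<alpha> + nsmul i (v (a - s \<rho>)) \<in> vdist_set v (R a) K) \<and>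
              (\<forall>\<delta>\<in>vdist_set v (R a) K. \<exists>\<rho>. \<rho>2 < \<rho> \<and>
                 \<delta> \<le> \<alpha> + nsmul i (v (a - s \<rho>)))) \<and>
       vdist_set v (R a) K =
         downclosure (value_group v K) ((\<lambda>\<sigma>. \<alpha> + nsmul i \<sigma>) ` vdist_set v a K)) \<and>
    pseudocauchy v (\<lambda>\<rho>. R (s \<rho>)) \<and>
    divergent_in v K (\<lambda>\<rho>. R (s \<rho>))"
  proof (intro conjI)
    show "poly Q a \<noteq> 0" by (rule Qa)
    show "\<exists>\<rho>0. \<forall>\<rho>. \<rho>0 < \<rho> \<longrightarrow> poly Q (s \<rho>) \<noteq> 0 \<and> R (s \<rho>) \<in> K" using \<rho>1 RK by blast
    show "pseudoconverges v (\<lambda>\<rho>. R (s \<rho>)) (R a)" using pconv_of_incr[OF val incD] .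
    show "pseudocauchy v (\<lambda>\<rho>. R (s \<rho>))" using pc_of_incr[OF val incD] .
    show "divergent_in v K (\<lambda>\<rho>. R (s \<rho>))" by (rule div)
    have A: "\<forall>\<rho>. \<rho>1 < \<rho> \<longrightarrow> vext v (R (s \<rho>) - R a) = Some (\<alpha> + nsmul i (v (a - s \<rho>)))"
      using \<rho>1 unfolding vext_def g_def by auto
    have B: "(\<forall>\<rho>. \<rho>1 < \<rho> \<longrightarrow> \<alpha> + nsmul i (v (a - s \<rho>)) \<in> vdist_set v (R a) K) \<and>
              (\<forall>\<delta>\<in>vdist_set v (R a) K. \<exists>\<rho>. \<rho>1 < \<rho> \<and> \<delta> \<le> \<alpha> + nsmul i (v (a - s \<rho>)))"
      using mem cof unfolding g_def by blast
    show "\<exists>\<alpha>\<in>value_group v K. \<exists>i::nat. i \<ge> 1 \<and>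
       (\<exists>\<rho>1. \<forall>\<rho>. \<rho>1 < \<rho> \<longrightarrow>
          vext v (R (s \<rho>) - R a) = Some (\<alpha> + nsmul i (v (a - s \<rho>)))) \<and>
       (\<exists>\<rho>2. (\<forall>\<rho>. \<rho>2 < \<rho> \<longrightarrow>
                 \<alpha> + nsmul i (v (a - s \<rho>)) \<in> vdist_set v (R a) K) \<and>
              (\<forall>\<delta>\<in>vdist_set v (R a) K. \<exists>\<rho>. \<rho>2 < \<rho> \<and>
                 \<delta> \<le> \<alpha> + nsmul i (v (a - s \<rho>)))) \<and>
       vdist_set v (R a) K =
         downclosure (value_group v K) ((\<lambda>\<sigma>. \<alpha> + nsmul i \<sigma>) ` vdist_set v a K)"
      using \<alpha>K i1 A B seteq by blast
  qed
  then show ?thesis unfolding R_def .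
qed


end
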